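(* Let $n\ge 2$, and let $S$ be a semitransitive subsemigroup of $\mathcal{I}_n\setminus\mathcal{S}_n$ with $|S|\le 2n$. Then $S$ contains exactly two non-zero idempotents. Their domains are disjoint, and the union of their domains is $X=\{1,\dots,n\}$.
   Context: $\mathcal{I}_n$ denotes the symmetric inverse semigroup of all partial injective maps of $X=\{1,\dots,n\}$ to itself (including the empty map, denoted $0$), with maps written on the right ($x\varphi$) and composed left to right ($x(\varphi\psi)=(x\varphi)\psi$). $\mathcal{S}_n$ is the symmetric group of all permutations of $X$, so $\mathcal{I}_n\setminus\mathcal{S}_n$ is the set of non-invertible partial injections. A semigroup $S$ of partial transformations of $X$ is semitransitive if for all $x,y\in X$ there is $\varphi\in S$ with $x\varphi=y$ or $y\varphi=x$. An idempotent is non-zero if it is not the empty map. *)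

theory Defs
  imports Main
begin

definition pinj :: "nat \<Rightarrow> (nat \<rightharpoonup> nat) \<Rightarrow> bool" where
  "pinj n f \<longleftrightarrow> dom f \<subseteq> {1..n} \<and> ran f \<subseteq> {1..n} \<and> inj_on f (dom f)"

definition symInv :: "nat \<Rightarrow> (nat \<rightharpoonup> nat) set" where
  "symInv n = {f. pinj n f}"

definition symGrp :: "nat \<Rightarrow> (nat \<rightharpoonup> nat) set" where
  "symGrp n = {f \<in> symInv n. dom f = {1..n} \<and> ran f = {1..n}}"

text \<open>Composition with maps written on the right: x(f g) = (x f) g.\<close>
definition pmul :: "(nat \<rightharpoonup> nat) \<Rightarrow> (nat \<rightharpoonup> nat) \<Rightarrow> (nat \<rightharpoonup> nat)" where
  "pmul f g = g \<circ>\<^sub>m f"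

definition subsemigroup_of :: "(nat \<rightharpoonup> nat) set \<Rightarrow> (nat \<rightharpoonup> nat) set \<Rightarrow> bool" where
  "subsemigroup_of S T \<longleftrightarrow> S \<subseteq> T \<and> (\<forall>f\<in>S. \<forall>g\<in>S. pmul f g \<in> S)"

definition semitransitive :: "nat \<Rightarrow> (nat \<rightharpoonup> nat) set \<Rightarrow> bool" where
  "semitransitive n S \<longleftrightarrow>
     (\<forall>x\<in>{1..n}. \<forall>y\<in>{1..n}. \<exists>f\<in>S. f x = Some y \<or> f y = Some x)"

definition nonzero_idempotents :: "(nat \<rightharpoonup> nat) set \<Rightarrow> (nat \<rightharpoonup> nat) set" where
  "nonzero_idempotents S = {e \<in> S. pmul e e = e \<and> e \<noteq> Map.empty}"

end

theory Submission
  imports Defs "HOL-Library.FuncSet"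
begin

definition pid :: "nat set \<Rightarrow> (nat \<rightharpoonup> nat)" where
  "pid A = (\<lambda>t. if t \<in> A then Some t else None)"

lemma pmul_apply: "pmul f g x = (case f x of None \<Rightarrow> None | Some y \<Rightarrow> g y)"
  by (simp add: pmul_def map_comp_def)

lemma pmul_Some: "f x = Some y \<Longrightarrow> pmul f g x = g y"
  by (simp add: pmul_apply)

lemma pmul_None: "f x = None \<Longrightarrow> pmul f g x = None"
  by (simp add: pmul_apply)

lemma dom_pmul: "dom (pmul f g) \<subseteq> dom f"
  by (auto simp: pmul_apply split: option.splits)

lemma ran_pmul: "ran (pmul f g) \<subseteq> ran g"
  by (auto simp: pmul_apply ran_def split: option.splits)

lemma pmul_assoc: "pmul (pmul f g) h = pmul f (pmul g h)"
  by (rule ext) (simp add: pmul_apply split: option.splits)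

lemma dom_pid [simp]: "dom (pid A) = A"
  by (auto simp: pid_def dom_def)

lemma ran_pid [simp]: "ran (pid A) = A"
  by (auto simp: pid_def ran_def)

lemma pid_Some [simp]: "pid A x = Some y \<longleftrightarrow> x \<in> A \<and> y = x"
  by (auto simp: pid_def)

lemma pid_pmul: "pmul (pid A) (pid B) = pid (A \<inter> B)"
  by (rule ext) (simp add: pmul_apply pid_def)

lemma pmul_pid_left: "pmul (pid A) s x = (if x \<in> A then s x else None)"
  by (simp add: pmul_apply pid_def)

lemma pmul_pid_right: "pmul s (pid A) x = (case s x of None \<Rightarrow> None | Some y \<Rightarrow> if y \<in> A then Some y else None)"
  by (simp add: pmul_apply pid_def)

lemma dom_pmul_pid_left: "dom (pmul (pid A) s) \<subseteq> A"
  using dom_pmul[of "pid A" s] by simp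

lemma ran_pmul_pid_right: "ran (pmul s (pid A)) \<subseteq> A"
  using ran_pmul[of s "pid A"] by simp

lemma idem_pid:
  assumes inj: "inj_on e (dom e)" and id: "pmul e e = e"
  shows "e = pid (dom e)"
proof (rule ext)
  fix t
  show "e t = pid (dom e) t"
  proof (cases "e t")
    case None
    then show ?thesis by (simp add: pid_def domIff)
  next
    case (Some u)
    have "pmul e e t = e u" using Some by (simp add: pmul_Some)
    then have eu: "e u = Some u" using id Some by simp
    have "t = u" using inj_onD[OF inj, of t u] Some eu by (auto simp: dom_def)
    then show ?thesis using Some by (simp add: pid_def dom_def)
  qed
qed

lemma pid_idem: "pmul (pid A) (pid A) = pid A"
  by (simp add: pid_pmul)

lemma pid_inj: "pid A = pid B \<Longrightarrow> A = B"
  by (metis dom_pid)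

primrec pw :: "(nat \<rightharpoonup> nat) \<Rightarrow> nat \<Rightarrow> (nat \<rightharpoonup> nat)" where
  "pw s 0 = s"
| "pw s (Suc k) = pmul (pw s k) s"

lemma pw_add: "pmul (pw s i) (pw s j) = pw s (i + j + 1)"
proof (induction j)
  case 0
  then show ?case by simp
next
  case (Suc j)
  have "pmul (pw s i) (pw s (Suc j)) = pmul (pmul (pw s i) (pw s j)) s"
    by (simp add: pmul_assoc)
  also have "\<dots> = pw s (i + Suc j + 1)" using Suc by simp
  finally show ?case .
qed

lemma pw_fix: "s x = Some x \<Longrightarrow> pw s k x = Some x"
  by (induction k) (simp_all add: pmul_Some)

lemma pw_dom: "dom (pw s k) \<subseteq> dom s"
proof (induction k)
  case (Suc k)
  then show ?case using dom_pmul[of "pw s k" s] by auto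
qed simp

lemma card_bottom:
  assumes fin: "finite W" and cov: "\<forall>t\<in>B. \<exists>w\<in>W. w b = Some t"
  shows "card B \<le> card W"
proof -
  have cov': "\<forall>t\<in>B. \<exists>w. w \<in> W \<and> w b = Some t" using cov by blast
  obtain wit where wit: "\<forall>t\<in>B. wit t \<in> W \<and> wit t b = Some t"
    using bchoice[OF cov'] by blast
  have inj: "inj_on wit B"
  proof (rule inj_onI)
    fix t t' assume t: "t \<in> B" and t': "t' \<in> B" and eq: "wit t = wit t'"
    have "Some t = wit t b" using wit t by simp
    also have "\<dots> = wit t' b" using eq by simp
    also have "\<dots> = Some t'" using wit t' by simp
    finally show "t = t'" by simp
  qed
  have "wit ` B \<subseteq> W" using wit by blast
  then show ?thesis using card_inj_on_le[OF inj _ fin] by blast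
qed

lemma card_cross:
  assumes fin: "finite K" and b: "b \<in> Q"
    and cov: "\<forall>a\<in>P. \<exists>k\<in>K. k a = Some b \<or> k b = Some a"
    and inj: "\<forall>k\<in>K. inj_on k (dom k)"
    and excl: "\<forall>k\<in>K. (\<forall>x\<in>P. \<forall>y\<in>Q. k x \<noteq> Some y) \<or> (\<forall>x\<in>P. \<forall>y\<in>Q. k y \<noteq> Some x)"
  shows "card P \<le> card K"
proof -
  have cov': "\<forall>a\<in>P. \<exists>k. k \<in> K \<and> (k a = Some b \<or> k b = Some a)" using cov by blast
  obtain wit where wit: "\<forall>a\<in>P. wit a \<in> K \<and> (wit a a = Some b \<or> wit a b = Some a)"
    using bchoice[OF cov'] by blast
  have injw: "inj_on wit P"
  proof (rule inj_onI)
    fix a a' assume a: "a \<in> P" and a': "a' \<in> P" and eq: "wit a = wit a'"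
    define k where "k = wit a"
    have kK: "k \<in> K" using wit a by (simp add: k_def)
    have ka: "k a = Some b \<or> k b = Some a" using wit a by (simp add: k_def)
    have ka': "k a' = Some b \<or> k b = Some a'" using wit a' eq by (simp add: k_def)
    have ik: "inj_on k (dom k)" using inj kK by blast
    have ex: "(\<forall>x\<in>P. \<forall>y\<in>Q. k x \<noteq> Some y) \<or> (\<forall>x\<in>P. \<forall>y\<in>Q. k y \<noteq> Some x)" using excl kK by blast
    show "a = a'"
    proof (cases "k a = Some b")
      case True
      show ?thesis
      proof (cases "k a' = Some b")
        case True
        then show ?thesis using \<open>k a = Some b\<close> ik by (metis domI inj_onD)
      next
        case False
        then have "k b = Some a'" using ka' by simp
        then show ?thesis using True ex a a' b by blast
      qed
    next
      case False
      then have kb: "k b = Some a" using ka by simp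
      show ?thesis
      proof (cases "k a' = Some b")
        case True
        then show ?thesis using kb ex a a' b by blast
      next
        case False
        then have "k b = Some a'" using ka' by simp
        then show ?thesis using kb by simp
      qed
    qed
  qed
  have "wit ` P \<subseteq> K" using wit by blast
  then show ?thesis using card_inj_on_le[OF injw _ fin] by blast
qed

lemma pmul_pidl_Some: "x \<in> A \<Longrightarrow> s x = Some y \<Longrightarrow> pmul (pid A) s x = Some y"
  by (simp add: pmul_pid_left)

lemma pmul_pidr_Some: "s x = Some y \<Longrightarrow> y \<in> A \<Longrightarrow> pmul s (pid A) x = Some y"
  by (simp add: pmul_pid_right)

lemma dom_sand: "dom (pmul (pmul (pid A) s) (pid B)) \<subseteq> A"
  using dom_pmul[of "pmul (pid A) s" "pid B"] dom_pmul_pid_left[of A s] by blast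

lemma ran_sand: "ran (pmul (pmul (pid A) s) (pid B)) \<subseteq> B"
  by (rule ran_pmul_pid_right)

locale st =
  fixes n :: nat and S :: "(nat \<rightharpoonup> nat) set"
  assumes n2: "n \<ge> 2"
    and sub: "subsemigroup_of S (symInv n - symGrp n)"
    and semi: "semitransitive n S"
begin

lemma closed: "f \<in> S \<Longrightarrow> g \<in> S \<Longrightarrow> pmul f g \<in> S"
  using sub by (simp add: subsemigroup_of_def)

lemma pinjS: "f \<in> S \<Longrightarrow> pinj n f"
  using sub by (auto simp: subsemigroup_of_def symInv_def)

lemma domS: "f \<in> S \<Longrightarrow> dom f \<subseteq> {1..n}"
  using pinjS by (simp add: pinj_def)

lemma injS: "f \<in> S \<Longrightarrow> inj_on f (dom f)"
  using pinjS by (simp add: pinj_def)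

lemma notgrp: "f \<in> S \<Longrightarrow> \<not> (dom f = {1..n} \<and> ran f = {1..n})"
  using sub by (auto simp: subsemigroup_of_def symGrp_def symInv_def)

lemma semi': "x \<in> {1..n} \<Longrightarrow> y \<in> {1..n} \<Longrightarrow> \<exists>f\<in>S. f x = Some y \<or> f y = Some x"
  using semi by (simp add: semitransitive_def)

lemma finS: "finite S"
proof -
  let ?M = "{f :: nat \<rightharpoonup> nat. dom f \<subseteq> {1..n} \<and> ran f \<subseteq> {1..n}}"
  have sub1: "S \<subseteq> ?M"
    using sub by (auto simp: subsemigroup_of_def symInv_def pinj_def)
  have inj: "inj_on (\<lambda>f. restrict f {1..n}) ?M"
  proof (rule inj_onI)
    fix f g assume f: "f \<in> ?M" and g: "g \<in> ?M" and eq: "restrict f {1..n} = restrict g {1..n}"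
    show "f = g"
    proof (rule ext)
      fix x show "f x = g x"
      proof (cases "x \<in> {1..n}")
        case True then show ?thesis using fun_cong[OF eq, of x] by simp
      next
        case False
        then have "f x = None" "g x = None" using f g by (auto simp: dom_def)
        then show ?thesis by simp
      qed
    qed
  qed
  have img: "(\<lambda>f. restrict f {1..n}) ` ?M \<subseteq> PiE {1..n} (\<lambda>_. insert None (Some ` {1..n}))"
  proof
    fix h assume "h \<in> (\<lambda>f. restrict f {1..n}) ` ?M"
    then obtain f where f: "f \<in> ?M" and h: "h = restrict f {1..n}" by blast
    show "h \<in> PiE {1..n} (\<lambda>_. insert None (Some ` {1..n}))"
      unfolding h
    proof (rule restrict_PiE_iff[THEN iffD2], intro ballI)
      fix x assume "x \<in> {1..n}"
      show "f x \<in> insert None (Some ` {1..n})"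
      proof (cases "f x")
        case (Some y)
        then have "y \<in> ran f" by (auto simp: ran_def)
        then show ?thesis using f Some by auto
      qed simp
    qed
  qed
  have "finite (PiE {1..n} (\<lambda>_. insert None (Some ` {1..n})))"
    by (rule finite_PiE) auto
  then have "finite ((\<lambda>f. restrict f {1..n}) ` ?M)" using img finite_subset by blast
  then have "finite ?M" using finite_imageD inj by blast
  then show ?thesis using sub1 finite_subset by blast
qed

lemma pw_in: "s \<in> S \<Longrightarrow> pw s k \<in> S"
  by (induction k) (simp_all add: closed)

lemma bottom:
  assumes "finite B" "B \<noteq> {}" "B \<subseteq> {1..n}"
  shows "\<exists>b\<in>B. \<forall>t\<in>B. \<exists>s\<in>S. s b = Some t"
  using assms
proof (induction B rule: finite_ne_induct)
  case (singleton x)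
  then show ?case using semi'[of x x] by auto
next
  case (insert x F)
  then obtain b where b: "b \<in> F" "\<forall>t\<in>F. \<exists>s\<in>S. s b = Some t" by auto
  have xX: "x \<in> {1..n}" and bX: "b \<in> {1..n}" using insert b by auto
  obtain f where f: "f \<in> S" "f x = Some b \<or> f b = Some x" using semi'[OF xX bX] by blast
  show ?case
  proof (cases "f x = Some b")
    case True
    have "\<forall>t\<in>insert x F. \<exists>s\<in>S. s x = Some t"
    proof
      fix t assume t: "t \<in> insert x F"
      show "\<exists>s\<in>S. s x = Some t"
      proof (cases "t = x")
        case True then show ?thesis using semi'[OF xX xX] by auto
      next
        case False
        then have "t \<in> F" using t by auto
        then obtain s where s: "s \<in> S" "s b = Some t" using b by auto
        have "pmul f s x = Some t" using True s by (simp add: pmul_Some)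
        then show ?thesis using closed[OF f(1) s(1)] by blast
      qed
    qed
    then show ?thesis by blast
  next
    case False
    then have fb: "f b = Some x" using f by auto
    have "\<forall>t\<in>insert x F. \<exists>s\<in>S. s b = Some t" using b fb f(1) by auto
    then show ?thesis using b(1) by blast
  qed
qed

lemma pw_period:
  assumes "pw s i = pw s j"
  shows "pw s (i + t) = pw s (j + t)"
  using assms by (induction t) simp_all

lemma pw_period2:
  assumes "pw s i = pw s j" "i < j"
  shows "pw s (i + t + q * (j - i)) = pw s (i + t)"
proof (induction q)
  case (Suc q)
  have "i + t + Suc q * (j - i) = j + (t + q * (j - i))" using assms(2) by simp
  then have "pw s (i + t + Suc q * (j - i)) = pw s (j + (t + q * (j - i)))" by (simp only:)
  also have "\<dots> = pw s (i + (t + q * (j - i)))" using pw_period[OF assms(1)] by simp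
  also have "\<dots> = pw s (i + t)" using Suc by (simp add: add.assoc)
  finally show ?case .
qed simp

lemma idem_pow:
  assumes s: "s \<in> S"
  shows "\<exists>e\<in>S. pmul e e = e \<and> dom e \<subseteq> dom s \<and> (\<forall>x. s x = Some x \<longrightarrow> e x = Some x)"
proof -
  have "pw s ` {0..card S} \<subseteq> S" using pw_in[OF s] by auto
  then have "card (pw s ` {0..card S}) \<le> card S" using card_mono finS by blast
  then have "\<not> inj_on (pw s) {0..card S}"
  proof -
    assume c: "card (pw s ` {0..card S}) \<le> card S"
    show ?thesis
    proof
      assume "inj_on (pw s) {0..card S}"
      then have "card (pw s ` {0..card S}) = card {0..card S}" by (rule card_image)
      then show False using c by simp
    qed
  qed
  then obtain i j where ij: "pw s i = pw s j" "i \<noteq> j" unfolding inj_on_def by blast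
  obtain a b where ab: "pw s a = pw s b" "a < b"
    using ij by (metis linorder_neqE_nat)
  define p where "p = b - a"
  have p1: "p \<ge> 1" using ab by (simp add: p_def)
  define k where "k = p * Suc a - 1"
  have Sk: "Suc k = p * Suc a" using p1 by (simp add: k_def)
  have "1 * Suc a \<le> p * Suc a" using p1 by (rule mult_le_mono1)
  then have ka: "a \<le> k" using Sk by simp
  have e1: "Suc a * (b - a) = Suc k" using Sk by (simp add: p_def mult.commute)
  have e2: "k + k + 1 = a + (k - a) + Suc a * (b - a)"
    using ka e1 by simp
  have "pmul (pw s k) (pw s k) = pw s (k + k + 1)" by (rule pw_add)
  also have "k + k + 1 = a + (k - a) + Suc a * (b - a)" by (rule e2)
  also have "pw s (a + (k - a) + Suc a * (b - a)) = pw s (a + (k - a))"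
    by (rule pw_period2[OF ab])
  also have "a + (k - a) = k" using ka by simp
  finally have idem: "pmul (pw s k) (pw s k) = pw s k" .
  have "pw s k \<in> S" using pw_in[OF s] .
  moreover have "dom (pw s k) \<subseteq> dom s" by (rule pw_dom)
  moreover have "\<forall>x. s x = Some x \<longrightarrow> pw s k x = Some x" using pw_fix by blast
  ultimately show ?thesis using idem by blast
qed

lemma zero_in: "Map.empty \<in> S"
proof (rule ccontr)
  assume nz: "Map.empty \<notin> S"
  have "(1::nat) \<in> {1..n}" using n2 by auto
  then obtain f0 where "f0 \<in> S" using semi' by blast
  have "\<exists>s. s \<in> S \<and> (\<forall>s'. s' \<in> S \<longrightarrow> card (dom s) \<le> card (dom s'))"
    by (rule ex_has_least_nat[of "\<lambda>s. s \<in> S" f0 "\<lambda>s. card (dom s)"]) (rule \<open>f0\<in>S\<close>)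
  then obtain s where s: "s \<in> S" and smin: "\<forall>s'. s' \<in> S \<longrightarrow> card (dom s) \<le> card (dom s')"
    by blast
  obtain e where e: "e \<in> S" "pmul e e = e" "dom e \<subseteq> dom s" using idem_pow[OF s] by blast
  define D where "D = dom e"
  have DX: "D \<subseteq> {1..n}" using domS[OF e(1)] by (simp add: D_def)
  have finD: "finite D" using DX finite_subset by blast
  have "finite (dom s)" using domS[OF s] finite_subset by blast
  then have "card D \<le> card (dom s)" using card_mono[of "dom s" "dom e"] e(3) by (simp add: D_def)
  moreover have "card (dom s) \<le> card D" using smin e(1) by (simp add: D_def)
  ultimately have "card D = card (dom s)" by simp
  then have emin: "\<forall>g\<in>S. card D \<le> card (dom g)" using smin by auto
  have epid: "e = pid D" using idem_pid[OF injS[OF e(1)] e(2)] by (simp add: D_def)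
  have Dne: "D \<noteq> {}"
  proof
    assume "D = {}"
    then have "dom e = {}" by (simp add: D_def)
    then have "e = Map.empty" by simp
    then show False using nz e(1) by simp
  qed
  have "ran e = D" using epid by simp
  then have DnX: "D \<noteq> {1..n}" using notgrp[OF e(1)] by (simp add: D_def)
  have inv: "\<forall>g\<in>S. \<forall>t\<in>D. \<exists>u\<in>D. g t = Some u"
  proof (intro ballI)
    fix g t assume g: "g \<in> S" and t: "t \<in> D"
    let ?h = "pmul (pmul e g) e"
    have hS: "?h \<in> S" using closed[OF closed[OF e(1) g] e(1)] .
    have hsub: "dom ?h \<subseteq> D"
      using dom_pmul[of "pmul e g" e] dom_pmul[of e g] by (auto simp: D_def)
    have "card D \<le> card (dom ?h)" using emin hS by blast
    then have "dom ?h = D" using card_seteq[OF finD hsub] by blast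
    then have "?h t \<noteq> None" using t by auto
    moreover have "e t = Some t" using t epid by simp
    ultimately obtain u where "g t = Some u" "e u \<noteq> None"
      by (auto simp: pmul_apply split: option.splits)
    then show "\<exists>u\<in>D. g t = Some u" by (auto simp: D_def)
  qed
  have "\<not> {1..n} \<subseteq> D" using DX DnX by (metis subset_antisym)
  then obtain w where w: "w \<in> {1..n}" "w \<notin> D" by blast
  obtain z where z: "z \<in> D" using Dne by blast
  have zX: "z \<in> {1..n}" using z DX by blast
  obtain g where g: "g \<in> S" "g z = Some w \<or> g w = Some z" using semi'[OF zX w(1)] by blast
  show False
  proof (cases "g z = Some w")
    case True
    obtain u where "u \<in> D" "g z = Some u" using inv g(1) z by blast
    then show False using True w(2) by simp
  next
    case False
    then have gw: "g w = Some z" using g by auto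
    let ?phi = "\<lambda>t. the (g t)"
    have img: "?phi ` D \<subseteq> D"
    proof
      fix x assume "x \<in> ?phi ` D"
      then obtain t where t: "t \<in> D" "x = the (g t)" by blast
      obtain u where "u \<in> D" "g t = Some u" using inv g(1) t(1) by blast
      then show "x \<in> D" using t(2) by simp
    qed
    have Ddom: "D \<subseteq> dom g" using inv g(1) by blast
    have injphi: "inj_on ?phi D"
    proof (rule inj_onI)
      fix a b assume a: "a \<in> D" and b: "b \<in> D" and eq: "the (g a) = the (g b)"
      obtain ua where "g a = Some ua" using inv g(1) a by blast
      moreover obtain ub where "g b = Some ub" using inv g(1) b by blast
      ultimately have gab: "g a = g b" using eq by simp
      show "a = b" by (rule inj_onD[OF injS[OF g(1)] gab]) (use Ddom a b in blast)+
    qed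
    have "?phi ` D = D" using endo_inj_surj[OF finD img injphi] .
    then obtain z' where z': "z' \<in> D" "the (g z') = z" using z by (metis imageE)
    obtain u where "g z' = Some u" using inv g(1) z'(1) by blast
    then have "g z' = Some z" using z'(2) by simp
    then have "g z' = g w" using gw by simp
    moreover have "w \<in> dom g" using gw by blast
    ultimately have "z' = w" using inj_onD[OF injS[OF g(1)], of z' w] Ddom z'(1) by blast
    then show False using z'(1) w(2) by simp
  qed
qed

lemma config:
  assumes e1: "e1 \<in> S" "pmul e1 e1 = e1" and e2: "e2 \<in> S" "pmul e2 e2 = e2"
    and ne1: "dom e1 \<noteq> {}" and nsub: "\<not> dom e2 \<subseteq> dom e1"
    and nX: "dom e1 \<union> dom e2 \<noteq> {1..n}"
  shows "2 * n + 1 \<le> card S"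
proof -
  define B1 where "B1 = dom e1"
  define F2 where "F2 = dom e2"
  define B2 where "B2 = F2 - B1"
  define B3 where "B3 = {1..n} - (B1 \<union> F2)"
  have p1: "e1 = pid B1" using idem_pid[OF injS[OF e1(1)] e1(2)] by (simp add: B1_def)
  have p2: "e2 = pid F2" using idem_pid[OF injS[OF e2(1)] e2(2)] by (simp add: F2_def)
  have i1: "pid B1 \<in> S" using e1(1) p1 by simp
  have i2: "pid F2 \<in> S" using e2(1) p2 by simp
  have B1X: "B1 \<subseteq> {1..n}" using domS[OF e1(1)] by (simp add: B1_def)
  have F2X: "F2 \<subseteq> {1..n}" using domS[OF e2(1)] by (simp add: F2_def)
  have B1ne: "B1 \<noteq> {}" using ne1 by (simp add: B1_def)
  have B2ne: "B2 \<noteq> {}" using nsub unfolding B2_def B1_def F2_def by blast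
  have B3ne: "B3 \<noteq> {}"
  proof
    assume "B3 = {}"
    then have "{1..n} \<subseteq> B1 \<union> F2" by (auto simp: B3_def)
    then have "B1 \<union> F2 = {1..n}" using B1X F2X by blast
    then show False using nX by (simp add: B1_def F2_def)
  qed
  have B2F: "B2 \<subseteq> F2" by (auto simp: B2_def)
  have d12: "\<And>x. x \<in> B1 \<Longrightarrow> x \<notin> B2" by (auto simp: B2_def)
  have d13: "\<And>x. x \<in> B1 \<Longrightarrow> x \<notin> B3" by (auto simp: B3_def)
  have dF3: "\<And>x. x \<in> F2 \<Longrightarrow> x \<notin> B3" by (auto simp: B3_def)
  have B2X: "B2 \<subseteq> {1..n}" using F2X B2F by blast
  have B3X: "B3 \<subseteq> {1..n}" by (auto simp: B3_def)
  have fin1: "finite B1" using B1X finite_subset by blast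
  have fin2: "finite B2" using B2X finite_subset by blast
  have fin3: "finite B3" using B3X finite_subset by blast
  have cardsum: "card B1 + card B2 + card B3 = n"
  proof -
    have U: "{1..n} = (B1 \<union> B2) \<union> B3" using B1X F2X by (auto simp: B2_def B3_def)
    have "card ((B1 \<union> B2) \<union> B3) = card (B1 \<union> B2) + card B3"
      by (rule card_Un_disjoint) (use fin1 fin2 fin3 d13 in \<open>auto simp: B2_def B3_def\<close>)
    also have "card (B1 \<union> B2) = card B1 + card B2"
      by (rule card_Un_disjoint) (use fin1 fin2 d12 in auto)
    finally have "card ((B1 \<union> B2) \<union> B3) = card B1 + card B2 + card B3" by simp
    moreover have "card {1..n} = n" by simp
    then have "card ((B1 \<union> B2) \<union> B3) = n" unfolding U .
    ultimately show ?thesis by simp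
  qed
  define W1 where "W1 = {s \<in> S. dom s \<subseteq> B1 \<and> ran s \<subseteq> B1 \<and> (\<exists>t u. s t = Some u)}"
  define W2 where "W2 = {s \<in> S. dom s \<subseteq> F2 \<and> ran s \<subseteq> F2 \<and> (\<exists>t u. s t = Some u \<and> t \<in> B2 \<and> u \<in> B2)}"
  define W3 where "W3 = {s \<in> S. \<exists>t u. s t = Some u \<and> t \<in> B3 \<and> u \<in> B3}"
  define K12 where "K12 = {s \<in> S. (dom s \<subseteq> B1 \<and> ran s \<subseteq> F2 \<and> (\<exists>t u. s t = Some u \<and> u \<in> B2))
      \<or> (ran s \<subseteq> B1 \<and> dom s \<subseteq> F2 \<and> (\<exists>t u. s t = Some u \<and> t \<in> B2))}"
  define K13 where "K13 = {s \<in> S. (dom s \<subseteq> B1 \<and> (\<exists>t u. s t = Some u \<and> u \<in> B3))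
      \<or> (ran s \<subseteq> B1 \<and> (\<exists>t u. s t = Some u \<and> t \<in> B3))}"
  define K23 where "K23 = {s \<in> S. (dom s \<subseteq> F2 \<and> (\<exists>t u. s t = Some u \<and> t \<in> B2) \<and> (\<exists>t u. s t = Some u \<and> u \<in> B3))
      \<or> (ran s \<subseteq> F2 \<and> (\<exists>t u. s t = Some u \<and> u \<in> B2) \<and> (\<exists>t u. s t = Some u \<and> t \<in> B3))}"
  have fW1: "finite W1" using finS by (simp add: W1_def)
  have fW2: "finite W2" using finS by (simp add: W2_def)
  have fW3: "finite W3" using finS by (simp add: W3_def)
  have fK12: "finite K12" using finS by (simp add: K12_def)
  have fK13: "finite K13" using finS by (simp add: K13_def)
  have fK23: "finite K23" using finS by (simp add: K23_def)
  have cW1: "card B1 \<le> card W1"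
  proof -
    obtain b where b: "b \<in> B1" "\<forall>t\<in>B1. \<exists>s\<in>S. s b = Some t" using bottom[OF fin1 B1ne B1X] by blast
    have "\<forall>t\<in>B1. \<exists>w\<in>W1. w b = Some t"
    proof
      fix t assume t: "t \<in> B1"
      obtain s where s: "s \<in> S" "s b = Some t" using b t by blast
      let ?w = "pmul (pmul (pid B1) s) (pid B1)"
      have wS: "?w \<in> S" using closed[OF closed[OF i1 s(1)] i1] .
      have wb: "?w b = Some t" using b(1) s(2) t by (simp add: pmul_pid_left pmul_pid_right)
      have "?w \<in> W1" unfolding W1_def using wS wb dom_sand[of B1 s B1] ran_sand[of B1 s B1] by blast
      then show "\<exists>w\<in>W1. w b = Some t" using wb by blast
    qed
    then show ?thesis by (rule card_bottom[OF fW1])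
  qed
  have cW2: "card B2 \<le> card W2"
  proof -
    obtain b where b: "b \<in> B2" "\<forall>t\<in>B2. \<exists>s\<in>S. s b = Some t" using bottom[OF fin2 B2ne B2X] by blast
    have "\<forall>t\<in>B2. \<exists>w\<in>W2. w b = Some t"
    proof
      fix t assume t: "t \<in> B2"
      obtain s where s: "s \<in> S" "s b = Some t" using b t by blast
      let ?w = "pmul (pmul (pid F2) s) (pid F2)"
      have wS: "?w \<in> S" using closed[OF closed[OF i2 s(1)] i2] .
      have bF: "b \<in> F2" and tF: "t \<in> F2" using b(1) t B2F by blast+
      have wb: "?w b = Some t" using bF s(2) tF by (simp add: pmul_pid_left pmul_pid_right)
      have "?w \<in> W2" unfolding W2_def using wS wb dom_sand[of F2 s F2] ran_sand[of F2 s F2] b(1) t by blast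
      then show "\<exists>w\<in>W2. w b = Some t" using wb by blast
    qed
    then show ?thesis by (rule card_bottom[OF fW2])
  qed
  have cW3: "card B3 \<le> card W3"
  proof -
    obtain b where b: "b \<in> B3" "\<forall>t\<in>B3. \<exists>s\<in>S. s b = Some t" using bottom[OF fin3 B3ne B3X] by blast
    have "\<forall>t\<in>B3. \<exists>w\<in>W3. w b = Some t"
    proof
      fix t assume t: "t \<in> B3"
      obtain s where s: "s \<in> S" "s b = Some t" using b t by blast
      have "s \<in> W3" unfolding W3_def using s b(1) t by blast
      then show "\<exists>w\<in>W3. w b = Some t" using s by blast
    qed
    then show ?thesis by (rule card_bottom[OF fW3])
  qed
  have injK: "\<And>K. K \<subseteq> S \<Longrightarrow> \<forall>k\<in>K. inj_on k (dom k)" using injS by blast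
  have cK12: "card B1 \<le> card K12"
  proof -
    obtain b where b: "b \<in> B2" using B2ne by blast
    have bF: "b \<in> F2" using b B2F by blast
    have bX: "b \<in> {1..n}" using b B2X by blast
    have cov: "\<forall>a\<in>B1. \<exists>k\<in>K12. k a = Some b \<or> k b = Some a"
    proof
      fix a assume a: "a \<in> B1"
      have aX: "a \<in> {1..n}" using a B1X by blast
      obtain s where s: "s \<in> S" "s a = Some b \<or> s b = Some a" using semi'[OF aX bX] by blast
      show "\<exists>k\<in>K12. k a = Some b \<or> k b = Some a"
      proof (cases "s a = Some b")
        case True
        let ?k = "pmul (pmul (pid B1) s) (pid F2)"
        have kS: "?k \<in> S" using closed[OF closed[OF i1 s(1)] i2] .
        have ka: "?k a = Some b" using a True bF by (simp add: pmul_pid_left pmul_pid_right)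
        have "?k \<in> K12" unfolding K12_def using kS ka dom_sand[of B1 s F2] ran_sand[of B1 s F2] b by blast
        then show ?thesis using ka by blast
      next
        case False
        then have sb: "s b = Some a" using s(2) by simp
        let ?k = "pmul (pmul (pid F2) s) (pid B1)"
        have kS: "?k \<in> S" using closed[OF closed[OF i2 s(1)] i1] .
        have kb: "?k b = Some a" using bF sb a by (simp add: pmul_pid_left pmul_pid_right)
        have "?k \<in> K12" unfolding K12_def using kS kb dom_sand[of F2 s B1] ran_sand[of F2 s B1] b by blast
        then show ?thesis using kb by blast
      qed
    qed
    have excl: "\<forall>k\<in>K12. (\<forall>x\<in>B1. \<forall>y\<in>B2. k x \<noteq> Some y) \<or> (\<forall>x\<in>B1. \<forall>y\<in>B2. k y \<noteq> Some x)"
    proof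
      fix k assume "k \<in> K12"
      then have "(dom k \<subseteq> B1) \<or> (ran k \<subseteq> B1)" unfolding K12_def by blast
      then show "(\<forall>x\<in>B1. \<forall>y\<in>B2. k x \<noteq> Some y) \<or> (\<forall>x\<in>B1. \<forall>y\<in>B2. k y \<noteq> Some x)"
      proof
        assume "dom k \<subseteq> B1"
        then have "\<forall>x\<in>B1. \<forall>y\<in>B2. k y \<noteq> Some x" using d12 by (blast dest: domI)
        then show ?thesis by blast
      next
        assume "ran k \<subseteq> B1"
        then have "\<forall>x\<in>B1. \<forall>y\<in>B2. k x \<noteq> Some y" using d12 by (blast dest: ranI)
        then show ?thesis by blast
      qed
    qed
    have "K12 \<subseteq> S" by (auto simp: K12_def)
    then show ?thesis using card_cross[OF fK12 b cov injK excl] by blast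
  qed
  have cK23: "card B2 \<le> card K23"
  proof -
    obtain b where b: "b \<in> B3" using B3ne by blast
    have bX: "b \<in> {1..n}" using b B3X by blast
    have cov: "\<forall>a\<in>B2. \<exists>k\<in>K23. k a = Some b \<or> k b = Some a"
    proof
      fix a assume a: "a \<in> B2"
      have aX: "a \<in> {1..n}" using a B2X by blast
      have aF: "a \<in> F2" using a B2F by blast
      obtain s where s: "s \<in> S" "s a = Some b \<or> s b = Some a" using semi'[OF aX bX] by blast
      show "\<exists>k\<in>K23. k a = Some b \<or> k b = Some a"
      proof (cases "s a = Some b")
        case True
        let ?k = "pmul (pid F2) s"
        have kS: "?k \<in> S" using closed[OF i2 s(1)] .
        have ka: "?k a = Some b" using aF True by (simp add: pmul_pid_left pmul_pid_right)
        have "?k \<in> K23" unfolding K23_def using kS ka dom_pmul_pid_left[of F2 s] a b by blast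
        then show ?thesis using ka by blast
      next
        case False
        then have sb: "s b = Some a" using s(2) by simp
        let ?k = "pmul s (pid F2)"
        have kS: "?k \<in> S" using closed[OF s(1) i2] .
        have kb: "?k b = Some a" using sb aF by (simp add: pmul_pid_left pmul_pid_right)
        have "?k \<in> K23" unfolding K23_def using kS kb ran_pmul_pid_right[of s F2] a b by blast
        then show ?thesis using kb by blast
      qed
    qed
    have excl: "\<forall>k\<in>K23. (\<forall>x\<in>B2. \<forall>y\<in>B3. k x \<noteq> Some y) \<or> (\<forall>x\<in>B2. \<forall>y\<in>B3. k y \<noteq> Some x)"
    proof
      fix k assume "k \<in> K23"
      then have "(dom k \<subseteq> F2) \<or> (ran k \<subseteq> F2)" unfolding K23_def by blast
      then show "(\<forall>x\<in>B2. \<forall>y\<in>B3. k x \<noteq> Some y) \<or> (\<forall>x\<in>B2. \<forall>y\<in>B3. k y \<noteq> Some x)"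
      proof
        assume "dom k \<subseteq> F2"
        then have "\<forall>x\<in>B2. \<forall>y\<in>B3. k y \<noteq> Some x" using dF3 by (blast dest: domI)
        then show ?thesis by blast
      next
        assume "ran k \<subseteq> F2"
        then have "\<forall>x\<in>B2. \<forall>y\<in>B3. k x \<noteq> Some y" using dF3 by (blast dest: ranI)
        then show ?thesis by blast
      qed
    qed
    have "K23 \<subseteq> S" by (auto simp: K23_def)
    then show ?thesis using card_cross[OF fK23 b cov injK excl] by blast
  qed
  have cK13: "card B3 \<le> card K13"
  proof -
    obtain b where b: "b \<in> B1" using B1ne by blast
    have bX: "b \<in> {1..n}" using b B1X by blast
    have cov: "\<forall>a\<in>B3. \<exists>k\<in>K13. k a = Some b \<or> k b = Some a"
    proof
      fix a assume a: "a \<in> B3"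
      have aX: "a \<in> {1..n}" using a B3X by blast
      obtain s where s: "s \<in> S" "s a = Some b \<or> s b = Some a" using semi'[OF aX bX] by blast
      show "\<exists>k\<in>K13. k a = Some b \<or> k b = Some a"
      proof (cases "s a = Some b")
        case True
        let ?k = "pmul s (pid B1)"
        have kS: "?k \<in> S" using closed[OF s(1) i1] .
        have ka: "?k a = Some b" using True b by (simp add: pmul_pid_left pmul_pid_right)
        have "?k \<in> K13" unfolding K13_def using kS ka ran_pmul_pid_right[of s B1] a by blast
        then show ?thesis using ka by blast
      next
        case False
        then have sb: "s b = Some a" using s(2) by simp
        let ?k = "pmul (pid B1) s"
        have kS: "?k \<in> S" using closed[OF i1 s(1)] .
        have kb: "?k b = Some a" using b sb by (simp add: pmul_pid_left pmul_pid_right)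
        have "?k \<in> K13" unfolding K13_def using kS kb dom_pmul_pid_left[of B1 s] a by blast
        then show ?thesis using kb by blast
      qed
    qed
    have excl: "\<forall>k\<in>K13. (\<forall>x\<in>B3. \<forall>y\<in>B1. k x \<noteq> Some y) \<or> (\<forall>x\<in>B3. \<forall>y\<in>B1. k y \<noteq> Some x)"
    proof
      fix k assume "k \<in> K13"
      then have "(dom k \<subseteq> B1) \<or> (ran k \<subseteq> B1)" unfolding K13_def by blast
      then show "(\<forall>x\<in>B3. \<forall>y\<in>B1. k x \<noteq> Some y) \<or> (\<forall>x\<in>B3. \<forall>y\<in>B1. k y \<noteq> Some x)"
      proof
        assume "dom k \<subseteq> B1"
        then have "\<forall>x\<in>B3. \<forall>y\<in>B1. k x \<noteq> Some y" using d13 by (blast dest: domI)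
        then show ?thesis by blast
      next
        assume "ran k \<subseteq> B1"
        then have "\<forall>x\<in>B3. \<forall>y\<in>B1. k y \<noteq> Some x" using d13 by (blast dest: ranI)
        then show ?thesis by blast
      qed
    qed
    have "K13 \<subseteq> S" by (auto simp: K13_def)
    then show ?thesis using card_cross[OF fK13 b cov injK excl] by blast
  qed
  note defs = W1_def W2_def W3_def K12_def K13_def K23_def
  have z1: "Map.empty \<notin> W1" "Map.empty \<notin> W2" "Map.empty \<notin> W3"
    "Map.empty \<notin> K12" "Map.empty \<notin> K13" "Map.empty \<notin> K23" by (simp_all add: defs)
  have x1: "W1 \<inter> W2 = {}" unfolding W1_def W2_def using d12 by (blast dest: domI)
  have x2: "W1 \<inter> W3 = {}" unfolding W1_def W3_def using d13 by (blast dest: domI)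
  have x3: "W1 \<inter> K12 = {}" unfolding W1_def K12_def using d12 by (blast dest: domI ranI)
  have x4: "W1 \<inter> K13 = {}" unfolding W1_def K13_def using d13 by (blast dest: domI ranI)
  have x5: "W1 \<inter> K23 = {}" unfolding W1_def K23_def using d12 by (blast dest: domI ranI)
  have x6: "W2 \<inter> W3 = {}" unfolding W2_def W3_def using dF3 by (blast dest: domI)
  have x7: "W2 \<inter> K12 = {}" unfolding W2_def K12_def using d12 by (blast dest: domI ranI)
  have x8: "W2 \<inter> K13 = {}" unfolding W2_def K13_def using d12 dF3 by (blast dest: domI ranI)
  have x9: "W2 \<inter> K23 = {}" unfolding W2_def K23_def using dF3 by (blast dest: domI ranI)
  have x10: "W3 \<inter> K12 = {}" unfolding W3_def K12_def using d13 by (blast dest: domI ranI)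
  have x11: "W3 \<inter> K13 = {}" unfolding W3_def K13_def using d13 by (blast dest: domI ranI)
  have x12: "W3 \<inter> K23 = {}" unfolding W3_def K23_def using dF3 by (blast dest: domI ranI)
  have x13: "K12 \<inter> K13 = {}" unfolding K12_def K13_def using d12 d13 dF3 by (blast dest: domI ranI)
  have x14: "K12 \<inter> K23 = {}" unfolding K12_def K23_def using d12 d13 by (blast dest: domI ranI)
  have x15: "K13 \<inter> K23 = {}" unfolding K13_def K23_def using d12 d13 dF3 by (blast dest: domI ranI)
  have "card ({Map.empty} \<union> (W1 \<union> (W2 \<union> (W3 \<union> (K12 \<union> (K13 \<union> K23))))))
      = 1 + (card W1 + (card W2 + (card W3 + (card K12 + (card K13 + card K23)))))"
  proof -
    have a6: "card (K13 \<union> K23) = card K13 + card K23" by (rule card_Un_disjoint[OF fK13 fK23 x15])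
    have a5: "card (K12 \<union> (K13 \<union> K23)) = card K12 + card (K13 \<union> K23)"
      by (rule card_Un_disjoint) (use fK12 fK13 fK23 x13 x14 in auto)
    have a4: "card (W3 \<union> (K12 \<union> (K13 \<union> K23))) = card W3 + card (K12 \<union> (K13 \<union> K23))"
      by (rule card_Un_disjoint) (use fW3 fK12 fK13 fK23 x10 x11 x12 in auto)
    have a3: "card (W2 \<union> (W3 \<union> (K12 \<union> (K13 \<union> K23)))) = card W2 + card (W3 \<union> (K12 \<union> (K13 \<union> K23)))"
      by (rule card_Un_disjoint) (use fW2 fW3 fK12 fK13 fK23 x6 x7 x8 x9 in auto)
    have a2: "card (W1 \<union> (W2 \<union> (W3 \<union> (K12 \<union> (K13 \<union> K23))))) = card W1 + card (W2 \<union> (W3 \<union> (K12 \<union> (K13 \<union> K23))))"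
      by (rule card_Un_disjoint) (use fW1 fW2 fW3 fK12 fK13 fK23 x1 x2 x3 x4 x5 in auto)
    have a1: "card ({Map.empty} \<union> (W1 \<union> (W2 \<union> (W3 \<union> (K12 \<union> (K13 \<union> K23)))))) = card {Map.empty :: nat \<rightharpoonup> nat} + card (W1 \<union> (W2 \<union> (W3 \<union> (K12 \<union> (K13 \<union> K23)))))"
      by (rule card_Un_disjoint) (use fW1 fW2 fW3 fK12 fK13 fK23 z1 in auto)
    show ?thesis using a1 a2 a3 a4 a5 a6 by simp
  qed
  moreover have "{Map.empty} \<union> (W1 \<union> (W2 \<union> (W3 \<union> (K12 \<union> (K13 \<union> K23))))) \<subseteq> S"
    using zero_in by (auto simp: defs)
  ultimately have "1 + (card W1 + (card W2 + (card W3 + (card K12 + (card K13 + card K23))))) \<le> card S"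
    using card_mono[OF finS] by metis
  then show ?thesis using cW1 cW2 cW3 cK12 cK13 cK23 cardsum by linarith
qed

end


theorem lemma2p1:
  fixes n :: nat and S :: "(nat \<rightharpoonup> nat) set"
  assumes "n \<ge> 2"
    and "subsemigroup_of S (symInv n - symGrp n)"
    and "semitransitive n S"
    and "card S \<le> 2 * n"
  shows "\<exists>e1 e2. e1 \<noteq> e2 \<and> nonzero_idempotents S = {e1, e2}
           \<and> dom e1 \<inter> dom e2 = {} \<and> dom e1 \<union> dom e2 = {1..n}"
proof -
  interpret st n S using assms(1-3) by unfold_locales
  define E where "E = nonzero_idempotents S"
  have Ein: "\<And>e. e \<in> E \<longleftrightarrow> e \<in> S \<and> pmul e e = e \<and> dom e \<noteq> {}"
    by (auto simp: E_def nonzero_idempotents_def)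
  have Epid: "\<And>e. e \<in> E \<Longrightarrow> e = pid (dom e)"
    using Ein idem_pid injS by blast
  have EX: "\<And>e. e \<in> E \<Longrightarrow> dom e \<noteq> {1..n}"
  proof -
    fix e assume e: "e \<in> E"
    have "ran e = dom e" using Epid[OF e] by (metis ran_pid)
    then show "dom e \<noteq> {1..n}" using notgrp e Ein by auto
  qed
  have EsubX: "\<And>e. e \<in> E \<Longrightarrow> dom e \<subseteq> {1..n}" using Ein domS by blast
  have nocfg: "\<And>e f. e \<in> E \<Longrightarrow> f \<in> E \<Longrightarrow> \<not> dom f \<subseteq> dom e \<Longrightarrow> dom e \<union> dom f = {1..n}"
  proof (rule ccontr)
    fix e f assume e: "e \<in> E" and f: "f \<in> E" and ns: "\<not> dom f \<subseteq> dom e"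
      and nX: "dom e \<union> dom f \<noteq> {1..n}"
    have "2 * n + 1 \<le> card S"
      using config[of e f] e f ns nX Ein by blast
    then show False using assms(4) by simp
  qed
  have aux: "\<And>e f. e \<in> E \<Longrightarrow> f \<in> E \<Longrightarrow> \<not> dom f \<subseteq> dom e \<Longrightarrow>
      dom e \<inter> dom f = {} \<and> dom e \<union> dom f = {1..n}"
  proof -
    fix e f assume e: "e \<in> E" and f: "f \<in> E" and ns: "\<not> dom f \<subseteq> dom e"
    have U: "dom e \<union> dom f = {1..n}" using nocfg[OF e f ns] .
    have "dom e \<inter> dom f = {}"
    proof (rule ccontr)
      assume W: "dom e \<inter> dom f \<noteq> {}"
      define w where "w = pmul e f"
      have wpid: "w = pid (dom e \<inter> dom f)"
        using Epid[OF e] Epid[OF f] pid_pmul unfolding w_def by metis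
      have wS: "w \<in> S" using closed e f Ein unfolding w_def by blast
      have wE: "w \<in> E" using Ein wS wpid W pid_idem by (metis dom_pid)
      have dw: "dom w = dom e \<inter> dom f" using wpid by simp
      show False
      proof (cases "dom e \<subseteq> dom w")
        case True
        then have "dom e \<subseteq> dom f" using dw by blast
        then have "dom e \<union> dom f = dom f" by blast
        then show False using U EX[OF f] by simp
      next
        case False
        have "dom w \<union> dom e = {1..n}" using nocfg[OF wE e False] .
        moreover have "dom w \<union> dom e = dom e" using dw by blast
        ultimately show False using EX[OF e] by simp
      qed
    qed
    then show "dom e \<inter> dom f = {} \<and> dom e \<union> dom f = {1..n}" using U by blast
  qed
  have key: "\<And>e f. e \<in> E \<Longrightarrow> f \<in> E \<Longrightarrow> e \<noteq> f \<Longrightarrow>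
      dom e \<inter> dom f = {} \<and> dom e \<union> dom f = {1..n}"
  proof -
    fix e f assume e: "e \<in> E" and f: "f \<in> E" and ne: "e \<noteq> f"
    have "dom e \<noteq> dom f" using Epid[OF e] Epid[OF f] ne by metis
    then have "\<not> dom f \<subseteq> dom e \<or> \<not> dom e \<subseteq> dom f" by blast
    then show "dom e \<inter> dom f = {} \<and> dom e \<union> dom f = {1..n}"
    proof
      assume "\<not> dom f \<subseteq> dom e"
      then show ?thesis using aux[OF e f] by blast
    next
      assume "\<not> dom e \<subseteq> dom f"
      then show ?thesis using aux[OF f e] by blast
    qed
  qed
  have pt: "\<And>x. x \<in> {1..n} \<Longrightarrow> \<exists>e\<in>E. x \<in> dom e"
  proof -
    fix x assume x: "x \<in> {1..n}"
    obtain s where s: "s \<in> S" "s x = Some x" using semi'[OF x x] by blast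
    obtain e where e: "e \<in> S" "pmul e e = e" "\<forall>y. s y = Some y \<longrightarrow> e y = Some y"
      using idem_pow[OF s(1)] by blast
    have "e x = Some x" using e(3) s(2) by blast
    then have "x \<in> dom e" by blast
    moreover then have "dom e \<noteq> {}" by blast
    ultimately show "\<exists>e\<in>E. x \<in> dom e" using e Ein by blast
  qed
  have "(1::nat) \<in> {1..n}" using assms(1) by simp
  then obtain e where e: "e \<in> E" using pt by blast
  have "\<not> {1..n} \<subseteq> dom e" using EX[OF e] EsubX[OF e] by blast
  then obtain y where y: "y \<in> {1..n}" "y \<notin> dom e" by blast
  obtain f where f: "f \<in> E" "y \<in> dom f" using pt[OF y(1)] by blast
  have ef: "e \<noteq> f" using y(2) f(2) by blast
  have K: "dom e \<inter> dom f = {} \<and> dom e \<union> dom f = {1..n}" using key[OF e f(1) ef] .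
  have "E = {e, f}"
  proof
    show "{e, f} \<subseteq> E" using e f by blast
    show "E \<subseteq> {e, f}"
    proof
      fix g assume g: "g \<in> E"
      show "g \<in> {e, f}"
      proof (rule ccontr)
        assume "g \<notin> {e, f}"
        then have "g \<noteq> e" "g \<noteq> f" by auto
        then have "dom g \<inter> dom e = {}" "dom g \<inter> dom f = {}" using key g e f(1) by blast+
        moreover have "dom g \<subseteq> {1..n}" using EsubX[OF g] .
        ultimately have "dom g = {}" using K by blast
        then show False using g Ein by blast
      qed
    qed
  qed
  then show ?thesis using ef K unfolding E_def by blast
qed

end
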